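(* Let $n\ge2$ and $\mathsf u\in\mathcal S_n$. Then $\mathsf r^{\mathsf u}\in\textsc{fact}(\lambda_n)$; that is, $\mathsf r^{\mathsf u}$ consists of $2n-2$ reflections whose product (in order) equals $\lambda_n$.
   Context: $\widetilde S_n$ is the group, under composition $(vw)(k)=v(w(k))$, of bijections $w:\mathbb Z\to\mathbb Z$ with $w(i+n)=w(i)+n$ and $\sum_{i=1}^n w(i)=\binom{n+1}2$. For $i\not\equiv j\pmod n$, $(\!(i,j)\!)$ swaps $i+kn$ and $j+kn$ for all $k\in\mathbb Z$; $s_i=(\!(i,i+1)\!)$ for $i\in\{0,\dots,n-1\}$. $\lambda_n\in\widetilde S_n$ is given by $\lambda_n(k)=k+n$ for $k\not\equiv0\pmod n$ and $\lambda_n(k)=k-n(n-1)$ for $k\equiv0\pmod n$; its reflection length is $2n-2$, and $\textsc{fact}(\lambda_n)$ is the set of sequences of $2n-2$ reflections whose product is $\lambda_n$. $\bm\lambda_n$ is the word $[s_0,\dots,s_{n-1}]$ repeated $n-1$ times, with $j$-th letter $\sigma_j=s_{(j-1)\bmod n}$ (index in $\{0,\dots,n-1\}$). A subword is $\mathsf u=[u_1,\dots,u_{n(n-1)}]$ with $u_j\in\{\sigma_j,e\}$; indices with $u_j=e$ are skips. Write $u_{(j)}=u_1\cdots u_j$ ($u_{(0)}=e$). $\mathcal S_n$ is the set of subwords with exactly $2n-2$ skips and $u_1\cdots u_{n(n-1)}=e$. $\textsc{inv}(\mathsf u)=[t_1,\dots,t_{n(n-1)}]$ with $t_j=u_{(j-1)}\sigma_ju_{(j-1)}^{-1}$,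 and $\mathsf r^{\mathsf u}$ is the subsequence of $\textsc{inv}(\mathsf u)$ consisting of the $t_j$ with $j$ a skip, in increasing order of $j$. *)

theory Defs
  imports Main
begin

text \<open>Affine symmetric group \<open>S~_n\<close>: bijections of the integers, n-periodic, with
  the window-sum normalisation. Group operation is composition \<open>(v w)(k) = v (w k)\<close>.\<close>
definition affine_perm :: "nat \<Rightarrow> (int \<Rightarrow> int) \<Rightarrow> bool" where
  "affine_perm n w \<longleftrightarrow> bij w \<and> (\<forall>i. w (i + int n) = w i + int n) \<and>
     (\<Sum>i=1..int n. w i) = int (n + 1 choose 2)"

text \<open>The reflection ((i,j)) for i, j not congruent mod n: swaps i+kn and j+kn for all k.\<close>
definition refl :: "nat \<Rightarrow> int \<Rightarrow> int \<Rightarrow> (int \<Rightarrow> int)" where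
  "refl n i j = (\<lambda>k. if k mod int n = i mod int n then k + (j - i)
                     else if k mod int n = j mod int n then k + (i - j) else k)"

definition is_reflection :: "nat \<Rightarrow> (int \<Rightarrow> int) \<Rightarrow> bool" where
  "is_reflection n t \<longleftrightarrow> (\<exists>i j. i mod int n \<noteq> j mod int n \<and> t = refl n i j)"

definition simple_refl :: "nat \<Rightarrow> nat \<Rightarrow> (int \<Rightarrow> int)" where
  "simple_refl n i = refl n (int i) (int i + 1)"

definition lambda_elt :: "nat \<Rightarrow> (int \<Rightarrow> int)" where
  "lambda_elt n = (\<lambda>k. if k mod int n \<noteq> 0 then k + int n else k - int n * (int n - 1))"

definition list_prod :: "(int \<Rightarrow> int) list \<Rightarrow> (int \<Rightarrow> int)" where
  "list_prod ts = foldr (\<circ>) ts id"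

definition fact_lambda :: "nat \<Rightarrow> (int \<Rightarrow> int) list set" where
  "fact_lambda n = {ts. length ts = 2 * n - 2 \<and> (\<forall>t \<in> set ts. is_reflection n t)
                        \<and> list_prod ts = lambda_elt n}"

text \<open>The j-th letter (j = 1..n(n-1)) of the word [s_0,...,s_{n-1}]^{n-1}.\<close>
definition sigma :: "nat \<Rightarrow> nat \<Rightarrow> (int \<Rightarrow> int)" where
  "sigma n j = simple_refl n ((j - 1) mod n)"

definition is_subword :: "nat \<Rightarrow> (nat \<Rightarrow> (int \<Rightarrow> int)) \<Rightarrow> bool" where
  "is_subword n u \<longleftrightarrow> (\<forall>j \<in> {1..n * (n - 1)}. u j = sigma n j \<or> u j = id)"

definition skips :: "nat \<Rightarrow> (nat \<Rightarrow> (int \<Rightarrow> int)) \<Rightarrow> nat set" where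
  "skips n u = {j \<in> {1..n * (n - 1)}. u j = id}"

primrec prefix :: "(nat \<Rightarrow> (int \<Rightarrow> int)) \<Rightarrow> nat \<Rightarrow> (int \<Rightarrow> int)" where
  "prefix u 0 = id"
| "prefix u (Suc j) = prefix u j \<circ> u (Suc j)"

definition S_set :: "nat \<Rightarrow> (nat \<Rightarrow> (int \<Rightarrow> int)) set" where
  "S_set n = {u. is_subword n u \<and> card (skips n u) = 2 * n - 2 \<and> prefix u (n * (n - 1)) = id}"

definition inv_elt :: "nat \<Rightarrow> (nat \<Rightarrow> (int \<Rightarrow> int)) \<Rightarrow> nat \<Rightarrow> (int \<Rightarrow> int)" where
  "inv_elt n u j = prefix u (j - 1) \<circ> sigma n j \<circ> inv (prefix u (j - 1))"

definition r_seq :: "nat \<Rightarrow> (nat \<Rightarrow> (int \<Rightarrow> int)) \<Rightarrow> (int \<Rightarrow> int) list" where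
  "r_seq n u = map (inv_elt n u) (filter (\<lambda>j. j \<in> skips n u) [1..<n * (n - 1) + 1])"

end

theory Submission imports Defs begin


definition perw :: "nat \<Rightarrow> (int \<Rightarrow> int) \<Rightarrow> bool" where
  "perw n w \<longleftrightarrow> bij w \<and> (\<forall>k. w (k + int n) = w k + int n)"

lemma per_nat: assumes "\<forall>k. w (k + int n) = w k + int n"
  shows "w (k + int t * int n) = w k + int t * int n"
proof (induction t)
  case 0 then show ?case by simp
next
  case (Suc t)
  have "w (k + int (Suc t) * int n) = w ((k + int t * int n) + int n)" by (simp add: algebra_simps)
  also have "\<dots> = w k + int t * int n + int n" using assms Suc by simp
  finally show ?case by (simp add: algebra_simps)
qed

lemma per_int: assumes "\<forall>k. w (k + int n) = w k + int n"
  shows "w (k + t * int n) = w k + t * int n"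
proof (cases "t \<ge> 0")
  case True then obtain m where "t = int m" by (metis nonneg_eq_int)
  then show ?thesis using per_nat[OF assms] by simp
next
  case False
  define m where "m = nat (-t)"
  have m: "t = - int m" using False m_def by simp
  have "w k = w ((k + t * int n) + int m * int n)" using m by simp
  also have "\<dots> = w (k + t * int n) + int m * int n" using per_nat[OF assms] by blast
  finally show ?thesis using m by simp
qed

lemma per_cong: assumes "inj w" "\<forall>k. w (k + int n) = w k + int n"
  shows "w x mod int n = w a mod int n \<longleftrightarrow> x mod int n = a mod int n"
proof
  assume "x mod int n = a mod int n"
  then have "int n dvd x - a" by (simp add: mod_eq_dvd_iff)
  then obtain t where t: "x = a + t * int n" by (metis dvd_div_mult_self diff_add_cancel add.commute)
  then have "w x = w a + t * int n" using per_int[OF assms(2)] by simp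
  then show "w x mod int n = w a mod int n" by simp
next
  assume "w x mod int n = w a mod int n"
  then have "int n dvd w x - w a" by (simp add: mod_eq_dvd_iff)
  then obtain t where t: "w x = w a + t * int n" by (metis dvd_div_mult_self diff_add_cancel add.commute)
  have "w (x + (-t) * int n) = w x + (-t) * int n" using per_int[OF assms(2)] by blast
  also have "\<dots> = w a" using t by simp
  finally have "x + (-t) * int n = a" using assms(1) by (simp add: inj_eq)
  then have "x = a + t * int n" by simp
  then show "x mod int n = a mod int n" by simp
qed

lemma refl_shift: fixes x i t :: int
  assumes "x = i + t * int n"
  shows "x + (j - i) = j + t * int n" using assms by simp

lemma conj_refl:
  assumes "perw n w" "i mod int n \<noteq> j mod int n"
  shows "w \<circ> refl n i j \<circ> inv w = refl n (w i) (w j)"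
    and "w i mod int n \<noteq> w j mod int n"
proof -
  have b: "bij w" and p: "\<forall>k. w (k + int n) = w k + int n" using assms(1) perw_def by auto
  have inj: "inj w" using b bij_is_inj by auto
  note cg = per_cong[OF inj p]
  show "w i mod int n \<noteq> w j mod int n" using cg assms(2) by blast
  show "w \<circ> refl n i j \<circ> inv w = refl n (w i) (w j)"
  proof
    fix y
    obtain x where y: "y = w x" using b by (metis bij_pointE)
    have ix: "inv w y = x" using y inj by simp
    have "w (refl n i j x) = refl n (w i) (w j) (w x)"
    proof (cases "x mod int n = i mod int n")
      case True
      then have "int n dvd x - i" by (simp add: mod_eq_dvd_iff)
      then obtain t where t: "x = i + t * int n" by (metis dvd_div_mult_self diff_add_cancel add.commute)
      have "w x = w i + t * int n" using per_int[OF p] t by simp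
      moreover have "w (x + (j - i)) = w j + t * int n" using per_int[OF p] t by (simp add: algebra_simps)
      ultimately show ?thesis using True cg by (simp add: refl_def)
    next
      case F1: False
      show ?thesis
      proof (cases "x mod int n = j mod int n")
        case True
        then have "int n dvd x - j" by (simp add: mod_eq_dvd_iff)
        then obtain t where t: "x = j + t * int n" by (metis dvd_div_mult_self diff_add_cancel add.commute)
        have "w x = w j + t * int n" using per_int[OF p] t by simp
        moreover have "w (x + (i - j)) = w i + t * int n" using per_int[OF p] t by (simp add: algebra_simps)
        moreover have "w x mod int n \<noteq> w i mod int n" using cg F1 by blast
        ultimately show ?thesis using True F1 by (simp add: refl_def)
      next
        case False
        then show ?thesis using F1 cg by (simp add: refl_def)
      qed
    qed
    then show "(w \<circ> refl n i j \<circ> inv w) y = refl n (w i) (w j) y" using y ix by simp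
  qed
qed

lemma refl_per: "refl n i j (k + int n) = refl n i j k + int n"
  by (simp add: refl_def)

lemma refl_invol: assumes "i mod int n \<noteq> j mod int n"
  shows "refl n i j (refl n i j k) = k"
proof -
  have a: "(k + (j - i)) mod int n = j mod int n" if "k mod int n = i mod int n"
  proof -
    have "(k + (j - i)) mod int n = (k mod int n + (j - i)) mod int n" by (simp add: mod_add_left_eq)
    also have "\<dots> = (i mod int n + (j - i)) mod int n" using that by simp
    also have "\<dots> = (i + (j - i)) mod int n" by (simp add: mod_add_left_eq)
    finally show ?thesis by simp
  qed
  have b: "(k + (i - j)) mod int n = i mod int n" if "k mod int n = j mod int n"
  proof -
    have "(k + (i - j)) mod int n = (k mod int n + (i - j)) mod int n" by (simp add: mod_add_left_eq)
    also have "\<dots> = (j mod int n + (i - j)) mod int n" using that by simp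
    also have "\<dots> = (j + (i - j)) mod int n" by (simp add: mod_add_left_eq)
    finally show ?thesis by simp
  qed
  show ?thesis using a b assms by (auto simp: refl_def)
qed

lemma refl_perw: assumes "i mod int n \<noteq> j mod int n" shows "perw n (refl n i j)"
proof -
  have "refl n i j \<circ> refl n i j = id" using refl_invol[OF assms] by auto
  then have "bij (refl n i j)" using o_bij by blast
  then show ?thesis unfolding perw_def using refl_per by auto
qed

lemma perw_id: "perw n id" by (simp add: perw_def)

lemma perw_comp: "perw n f \<Longrightarrow> perw n g \<Longrightarrow> perw n (f \<circ> g)"
  unfolding perw_def using bij_comp by auto



lemma sr: "i < n \<Longrightarrow> simple_refl n i k = (if k mod int n = int i then k + 1
   else if k mod int n = (int i + 1) mod int n then k - 1 else k)"
  by (simp add: simple_refl_def refl_def)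

lemma modadd: fixes k r d n :: int assumes "k mod n = r" "0 \<le> r + d" "r + d < n"
  shows "(k + d) mod n = r + d"
proof -
  have "(k + d) mod n = (k mod n + d) mod n" by (simp add: mod_add_left_eq)
  then show ?thesis using assms by simp
qed

primrec dd :: "nat \<Rightarrow> nat \<Rightarrow> int \<Rightarrow> int" where
  "dd n 0 = id"
| "dd n (Suc m) = dd n m \<circ> simple_refl n m"

lemma dd_form: assumes "n \<ge> 2" shows "m < n \<Longrightarrow> dd n m k =
  (if k mod int n < int m then k + 1 else if k mod int n = int m then k - int m else k)"
proof (induction m arbitrary: k)
  case 0
  have "0 \<le> k mod int n" using assms by simp
  then show ?case by simp
next
  case (Suc m)
  have m1: "(int m + 1) mod int n = int m + 1" using Suc.prems by simp
  have r0: "0 \<le> k mod int n" "k mod int n < int n" using assms by auto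
  have e: "dd n (Suc m) k = dd n m (simple_refl n m k)" by simp
  show ?case
  proof (cases "k mod int n = int m")
    case True
    have "(k + 1) mod int n = int m + 1" using modadd[OF True] Suc.prems by simp
    then show ?thesis using e sr[of m n k] Suc True m1 by simp
  next
    case F: False
    show ?thesis
    proof (cases "k mod int n = int m + 1")
      case True
      have "(k + (-1)) mod int n = int m" using modadd[OF True, of "-1"] Suc.prems by simp
      then show ?thesis using e sr[of m n k] Suc True m1 F by simp
    next
      case False
      then show ?thesis using e sr[of m n k] Suc False m1 F by auto
    qed
  qed
qed

lemma c_form: assumes "n \<ge> 2" shows "dd n n k =
  (if k mod int n = 0 then k - int n else if k mod int n = int n - 1 then k + 2 else k + 1)"
proof -
  obtain m where m: "n = Suc m" "m < n" using assms by (cases n) auto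
  have m1: "(int m + 1) mod int n = 0"
  proof -
    have "int n = int m + 1" using m by simp
    then show ?thesis by (metis mod_self)
  qed
  have r0: "0 \<le> k mod int n" "k mod int n < int n" using assms by auto
  have e: "dd n n k = dd n m (simple_refl n m k)" using m by simp
  note D = dd_form[OF assms m(2)]
  show ?thesis
  proof (cases "k mod int n = int m")
    case True
    have "(k + 1) mod int n = (int m + 1) mod int n" using True by (metis mod_add_left_eq)
    then have "(k + 1) mod int n = 0" using m1 by simp
    then show ?thesis using e sr[of m n k] True m1 D m assms by simp
  next
    case F: False
    show ?thesis
    proof (cases "k mod int n = 0")
      case True
      have "k + (-1) = (int n - 1) + (k div int n - 1) * int n"
        using True div_mult_mod_eq[of k "int n"] by (simp add: algebra_simps)
      then have "(k + (-1)) mod int n = (int n - 1) mod int n" by (metis mod_mult_self1)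
      also have "\<dots> = int n - 1" by (rule mod_pos_pos_trivial) (use assms in auto)
      finally have "(k + (-1)) mod int n = int m" using m by simp
      then show ?thesis using e sr[of m n k] True m1 F D m by simp
    next
      case False
      have "int n = int m + 1" using m by simp
      then have "k mod int n < int m" using r0 F by linarith
      then show ?thesis using e sr[of m n k] False m1 F D m r0 by auto
    qed
  qed
qed



lemma cpow0: assumes "n \<ge> 2" "k mod int n = 0"
  shows "(dd n n ^^ j) k = k - int j * int n"
proof (induction j)
  case 0 then show ?case by simp
next
  case (Suc j)
  have "(k - int j * int n) mod int n = 0" using assms(2)
    by (metis add.commute diff_conv_add_uminus mod_mult_self1 mult_minus_left)
  have "(dd n n ^^ Suc j) k = dd n n ((dd n n ^^ j) k)" by simp
  also have "\<dots> = dd n n (k - int j * int n)" using Suc by simp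
  also have "\<dots> = k - int j * int n - int n" using c_form[OF assms(1), of "k - int j * int n"] \<open>(k - int j * int n) mod int n = 0\<close> by simp
  finally show ?case by (simp add: algebra_simps)
qed

lemma alg: fixes y k j A n q r a D M :: int
  assumes "y = k + j + A" "k = n * q + r" "a = r - 1 + j" "a = D * A + M" "D = n - 1"
  shows "y = n * (q + A) + (M + 1)"
proof -
  have "y = n * q + r + j + A" using assms by simp
  also have "r + j = a + 1" using assms by simp
  then have "n * q + r + j + A = n * q + D * A + M + 1 + A" using assms by simp
  also have "\<dots> = n * (q + A) + (M + 1)"
  proof -
    have "(D + 1) * A = n * A" using assms(5) by simp
    then have "D * A + A = n * A" by (simp add: algebra_simps)
    then show ?thesis by (simp add: algebra_simps)
  qed
  finally show ?thesis using \<open>y = n * q + r + j + A\<close> \<open>n * q + r + j + A = n * q + D * A + M + 1 + A\<close> by simp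
qed

lemma divsmall: fixes D q r :: int assumes "0 \<le> r" "r < D" shows "(D * q + r) div D = q"
  using assms by (simp add: add.commute)

lemma cpow: assumes "n \<ge> 2" "k mod int n \<noteq> 0"
  shows "(dd n n ^^ j) k = k + int j + (k mod int n - 1 + int j) div (int n - 1)"
proof (induction j)
  case 0
  have r0: "0 \<le> k mod int n" "k mod int n < int n" using assms by auto
  have "0 \<le> k mod int n - 1" "k mod int n - 1 < int n - 1" using assms(2) r0 by auto
  then show ?case by simp
next
  case (Suc j)
  define D where "D = int n - 1"
  define r where "r = k mod int n"
  define a where "a = r - 1 + int j"
  define q where "q = k div int n"
  have Dp: "D > 0" using assms D_def by simp
  have kq: "k = int n * q + r" unfolding q_def r_def by simp
  have aD: "a = D * (a div D) + a mod D" by simp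
  have am: "0 \<le> a mod D" "a mod D < D" using Dp by auto
  define y where "y = (dd n n ^^ j) k"
  have y: "y = k + int j + a div D" using Suc y_def a_def r_def D_def by simp
  have y2: "y = int n * (q + a div D) + (a mod D + 1)"
    using alg[OF y kq a_def aD D_def] .
  have ym: "y mod int n = a mod D + 1"
  proof -
    have "y mod int n = (a mod D + 1) mod int n" using y2 by (simp add: add.commute)
    also have "\<dots> = a mod D + 1" using am D_def by simp
    finally show ?thesis .
  qed
  have step: "(dd n n ^^ Suc j) k = dd n n y" using y_def by simp
  show ?case
  proof (cases "a mod D = D - 1")
    case True
    have "a + 1 = D * (a div D + 1) + 0" using aD True by (simp add: algebra_simps)
    then have "(a + 1) div D = a div D + 1" using Dp divsmall[of 0 D "a div D + 1"] by simp
    moreover have "dd n n y = y + 2" using c_form[OF assms(1)] ym True D_def am by simp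
    ultimately show ?thesis using step y a_def r_def D_def by (simp add: algebra_simps)
  next
    case False
    have "a + 1 = D * (a div D) + (a mod D + 1)" using aD by (simp add: algebra_simps)
    then have "(a + 1) div D = a div D" using Dp am False divsmall[of "a mod D + 1" D "a div D"] by simp
    moreover have "dd n n y = y + 1" using c_form[OF assms(1)] ym False D_def am by simp
    ultimately show ?thesis using step y a_def r_def D_def by (simp add: algebra_simps)
  qed
qed

lemma cpow_lambda: assumes "n \<ge> 2" shows "dd n n ^^ (n - 1) = lambda_elt n"
proof
  fix k
  show "(dd n n ^^ (n - 1)) k = lambda_elt n k"
  proof (cases "k mod int n = 0")
    case True
    have "(dd n n ^^ (n - 1)) k = k - int (n - 1) * int n" by (rule cpow0[OF assms True])
    moreover have "int (n - 1) = int n - 1" using assms by simp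
    ultimately show ?thesis using True by (simp add: lambda_elt_def algebra_simps)
  next
    case False
    define r where "r = k mod int n"
    have r0: "0 \<le> r" "r < int n" using assms r_def by auto
    have "0 \<le> r - 1" "r - 1 < int n - 1" using False r_def r0 by auto
    then have "(r - 1 + (int n - 1)) div (int n - 1) = 1"
      using divsmall[of "r - 1" "int n - 1" 1] by (simp add: algebra_simps)
    then show ?thesis using cpow[OF assms False, of "n - 1"] assms False r_def
      by (simp add: lambda_elt_def of_nat_diff)
  qed
qed


lemma sr_neq: assumes "n \<ge> 2" shows "int i mod int n \<noteq> (int i + 1) mod int n"
proof
  assume "int i mod int n = (int i + 1) mod int n"
  then have "int n dvd int i - (int i + 1)" by (simp add: mod_eq_dvd_iff)
  then have "int n dvd 1" by simp
  then show False using assms by simp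
qed

lemma perw_sigma: assumes "n \<ge> 2" shows "perw n (sigma n j)"
  unfolding sigma_def simple_refl_def using refl_perw[OF sr_neq[OF assms]] by simp

lemma perw_prefix: assumes "n \<ge> 2" "is_subword n u"
  shows "j \<le> n * (n - 1) \<Longrightarrow> perw n (prefix u j)"
proof (induction j)
  case 0 then show ?case using perw_id by (simp add: id_def)
next
  case (Suc j)
  have "u (Suc j) = sigma n (Suc j) \<or> u (Suc j) = id" using assms(2) Suc.prems
    unfolding is_subword_def by auto
  then have "perw n (u (Suc j))" using perw_sigma[OF assms(1)] perw_id by auto
  moreover have "perw n (prefix u j)" using Suc by simp
  ultimately show ?case unfolding prefix.simps by (rule perw_comp[rotated])
qed

lemma W_split: assumes "n \<ge> 2"
  shows "m \<le> n \<Longrightarrow> prefix (sigma n) (k * n + m) = (dd n n ^^ k) \<circ> dd n m"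
proof (induction k arbitrary: m)
  case 0
  show ?case using 0
  proof (induction m)
    case 0 then show ?case by simp
  next
    case (Suc m)
    have "sigma n (Suc m) = simple_refl n m" using Suc.prems by (simp add: sigma_def)
    then show ?case using Suc by simp
  qed
next
  case (Suc k)
  have base: "prefix (sigma n) (Suc k * n) = (dd n n ^^ Suc k)"
  proof -
    have "prefix (sigma n) (Suc k * n) = prefix (sigma n) (k * n + n)" by (simp add: algebra_simps)
    also have "\<dots> = (dd n n ^^ k) \<circ> dd n n" by (rule Suc.IH) simp
    also have "\<dots> = dd n n ^^ Suc k" by (rule funpow_Suc_right[symmetric])
    finally show ?thesis .
  qed
  show ?case using Suc.prems
  proof (induction m)
    case 0 then show ?case using base by simp
  next
    case (Suc m)
    have e1: "(Suc k * n + m) mod n = m mod n" by (simp only: add.commute[of "Suc k * n"] mod_mult_self1)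
    have e2: "m mod n = m" using Suc.prems by simp
    have "sigma n (Suc (Suc k * n + m)) = simple_refl n ((Suc k * n + m) mod n)"
      by (simp only: sigma_def diff_Suc_1)
    then have "sigma n (Suc (Suc k * n + m)) = simple_refl n m" using e1 e2 by simp
    then show ?case using Suc by simp
  qed
qed

lemma word_lambda: assumes "n \<ge> 2" shows "prefix (sigma n) (n * (n - 1)) = lambda_elt n"
proof -
  have "prefix (sigma n) (n * (n - 1)) = prefix (sigma n) ((n - 1) * n + 0)" by (simp add: mult.commute)
  also have "\<dots> = dd n n ^^ (n - 1)" using W_split[OF assms, of 0 "n - 1"] by simp
  also have "\<dots> = lambda_elt n" by (rule cpow_lambda[OF assms])
  finally show ?thesis .
qed

lemma foldr_comp: "foldr (\<circ>) xs g = foldr (\<circ>) xs id \<circ> g"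
  by (induction xs) (auto simp: comp_assoc)

lemma list_prod_snoc: "list_prod (xs @ [t]) = list_prod xs \<circ> t"
  unfolding list_prod_def using foldr_comp[of xs t] by simp

lemma main_ind: assumes "n \<ge> 2" "is_subword n u"
  shows "j \<le> n * (n - 1) \<Longrightarrow>
    list_prod (map (inv_elt n u) (filter (\<lambda>i. i \<in> skips n u) [1..<j + 1])) \<circ> prefix u j
    = prefix (sigma n) j"
proof (induction j)
  case 0 then show ?case by (simp add: list_prod_def)
next
  case (Suc j)
  define R where "R = list_prod (map (inv_elt n u) (filter (\<lambda>i. i \<in> skips n u) [1..<j + 1]))"
  have IH: "R \<circ> prefix u j = prefix (sigma n) j" unfolding R_def by (rule Suc.IH) (use Suc.prems in simp)
  have bp: "bij (prefix u j)" using perw_prefix[OF assms, of j] Suc.prems perw_def by simp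
  have up: "[1..<Suc j + 1] = [1..<j + 1] @ [Suc j]" by simp
  have sk: "Suc j \<in> skips n u \<longleftrightarrow> u (Suc j) = id" using Suc.prems unfolding skips_def by auto
  show ?case
  proof (cases "u (Suc j) = id")
    case True
    have L: "list_prod (map (inv_elt n u) (filter (\<lambda>i. i \<in> skips n u) [1..<Suc j + 1]))
       = R \<circ> inv_elt n u (Suc j)" unfolding up R_def using sk True by (simp add: list_prod_snoc)
    have "inv (prefix u j) \<circ> prefix u j = id" using bp by (simp add: bij_is_inj)
    then have eq: "R \<circ> inv_elt n u (Suc j) \<circ> prefix u (Suc j) = R \<circ> prefix u j \<circ> sigma n (Suc j)"
      using True unfolding inv_elt_def by (simp add: comp_assoc)
    have "list_prod (map (inv_elt n u) (filter (\<lambda>i. i \<in> skips n u) [1..<Suc j + 1])) \<circ> prefix u (Suc j)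
        = R \<circ> inv_elt n u (Suc j) \<circ> prefix u (Suc j)" by (simp only: L)
    also have "\<dots> = R \<circ> prefix u j \<circ> sigma n (Suc j)" by (rule eq)
    also have "\<dots> = prefix (sigma n) j \<circ> sigma n (Suc j)" by (simp only: IH)
    also have "\<dots> = prefix (sigma n) (Suc j)" by simp
    finally show ?thesis .
  next
    case False
    have us: "u (Suc j) = sigma n (Suc j)" using False assms(2) Suc.prems unfolding is_subword_def by auto
    have L: "list_prod (map (inv_elt n u) (filter (\<lambda>i. i \<in> skips n u) [1..<Suc j + 1]))
       = R" unfolding up R_def using sk False by simp
    have "list_prod (map (inv_elt n u) (filter (\<lambda>i. i \<in> skips n u) [1..<Suc j + 1])) \<circ> prefix u (Suc j)
        = R \<circ> prefix u (Suc j)" by (simp only: L)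
    also have "\<dots> = R \<circ> (prefix u j \<circ> sigma n (Suc j))" by (simp only: prefix.simps us)
    also have "\<dots> = R \<circ> prefix u j \<circ> sigma n (Suc j)" by (simp only: comp_assoc)
    also have "\<dots> = prefix (sigma n) j \<circ> sigma n (Suc j)" by (simp only: IH)
    also have "\<dots> = prefix (sigma n) (Suc j)" by simp
    finally show ?thesis .
  qed
qed

theorem corollary5p10:
  fixes n :: nat and u :: "nat \<Rightarrow> (int \<Rightarrow> int)"
  assumes "n \<ge> 2" and "u \<in> S_set n"
  shows "r_seq n u \<in> fact_lambda n"
proof -
  have sw: "is_subword n u" and cs: "card (skips n u) = 2 * n - 2"
    and pe: "prefix u (n * (n - 1)) = id" using assms(2) unfolding S_set_def by auto
  define xs where "xs = filter (\<lambda>i. i \<in> skips n u) [1..<n * (n - 1) + 1]"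
  have "set xs = skips n u" using assms(1) unfolding xs_def skips_def by auto
  moreover have "distinct xs" unfolding xs_def by simp
  ultimately have len: "length (r_seq n u) = 2 * n - 2"
    using cs distinct_card unfolding r_seq_def xs_def by (metis length_map)
  have refl: "is_reflection n t" if "t \<in> set (r_seq n u)" for t
  proof -
    have "t \<in> inv_elt n u ` set (filter (\<lambda>i. i \<in> skips n u) [1..<n * (n - 1) + 1])"
      using that unfolding r_seq_def by (simp only: set_map)
    then obtain j where j0: "j \<in> set (filter (\<lambda>i. i \<in> skips n u) [1..<n * (n - 1) + 1])" "t = inv_elt n u j"
      by blast
    then have j: "j \<in> skips n u" "t = inv_elt n u j" by auto
    have "j \<le> n * (n - 1)" using j(1) unfolding skips_def by auto
    then have jb: "j - 1 \<le> n * (n - 1)" by (meson diff_le_self le_trans)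
    have pw: "perw n (prefix u (j - 1))" using perw_prefix[OF assms(1) sw jb] .
    define a where "a = int ((j - 1) mod n)"
    have ne: "a mod int n \<noteq> (a + 1) mod int n" using sr_neq[OF assms(1)] a_def by simp
    have "t = prefix u (j - 1) \<circ> refl n a (a + 1) \<circ> inv (prefix u (j - 1))"
      using j(2) unfolding inv_elt_def sigma_def simple_refl_def a_def by simp
    then have "t = refl n (prefix u (j - 1) a) (prefix u (j - 1) (a + 1))"
      using conj_refl(1)[OF pw ne] by simp
    moreover have "prefix u (j - 1) a mod int n \<noteq> prefix u (j - 1) (a + 1) mod int n"
      using conj_refl(2)[OF pw ne] .
    ultimately show ?thesis unfolding is_reflection_def by blast
  qed
  have "list_prod (r_seq n u) = lambda_elt n"
    using main_ind[OF assms(1) sw, of "n * (n - 1)"] pe word_lambda[OF assms(1)]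
    unfolding r_seq_def by simp
  then show ?thesis unfolding fact_lambda_def using len refl by auto
qed

end
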